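(* Assume the standing setting and let $\epsilon>0$. If $|u^0_i-u^0_{i+1}|\le \epsilon/3^{M}$ for all $i\in\mathbb Z$, then for all $j\in\mathbb Z$ and all integers $0\le n\le N$, $$|w^{n+1}_j-w^n_j|\le \frac{\epsilon}{3^{N-n}},\qquad |w^n_j-w^n_{j+1}|\le \frac{\epsilon}{3^{N-n}} .$$
   Context: Standing setting. Let $F:\mathbb R\to\mathbb R$ be continuously differentiable. For a spatial step $\eta>0$, a time step $\tau>0$ and an initial sequence $(z^0_i)_{i\in\mathbb Z}$ of reals, the EFC (Euler forward in time, centered in space) scheme produces $(z^n_i)_{i\in\mathbb Z,\,n\in\mathbb N}$ by $z^{n+1}_i=z^n_i-F'(z^n_i)\frac{\tau}{2\eta}\,(z^n_{i+1}-z^n_{i-1})$. It satisfies the CFL condition if $|F'(z^n_i)|\,\tau/\eta\le 1$ for all $i\in\mathbb Z$, $n\in\mathbb N$. Fix $a\in\mathbb R$, $h>0$, $\Delta t>0$, an integer $N>1$ and an even integer $r\ge 2$; put $k=h/r$, $dt=\Delta t/r$, $M=Nr$. Let $u_0:\mathbb R\to\mathbb R$. The coarse solution $(w^n_j)$ is the EFC scheme with $\eta=h$, $\tau=\Delta t$, $w^0_j=u_0(a+jh)$; the fine solution $(u^n_i)$ is the EFC scheme with $\eta=k$, $\tau=dt$, $u^0_i=u_0(a+ik)$ (so $w^0_j=u^0_{jr}$). Both are assumed to satisfy the CFL condition. *)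

theory Defs
  imports "HOL-Analysis.Analysis"
begin

text \<open>EFC scheme (Euler forward in time, centered in space) for the flux F,
  spatial step eta, time step tau, initial sequence z0.
  efc F eta tau z0 n i is z^n_i.\<close>
fun efc :: "(real \<Rightarrow> real) \<Rightarrow> real \<Rightarrow> real \<Rightarrow> (int \<Rightarrow> real) \<Rightarrow> nat \<Rightarrow> int \<Rightarrow> real" where
  "efc F eta tau z0 0 i = z0 i"
| "efc F eta tau z0 (Suc n) i =
     efc F eta tau z0 n i
     - deriv F (efc F eta tau z0 n i) * (tau / (2 * eta))
       * (efc F eta tau z0 n (i + 1) - efc F eta tau z0 n (i - 1))"

definition efc_cfl :: "(real \<Rightarrow> real) \<Rightarrow> real \<Rightarrow> real \<Rightarrow> (int \<Rightarrow> real) \<Rightarrow> bool" where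
  "efc_cfl F eta tau z0 \<longleftrightarrow>
     (\<forall>n i. \<bar>deriv F (efc F eta tau z0 n i)\<bar> * tau / eta \<le> 1)"

end

theory Submission
  imports Defs
begin

lemma efc_step:
  fixes z0 :: "int \<Rightarrow> real"
  assumes cfl: "efc_cfl F h dt z0" and h: "h > 0" and dt: "dt > 0"
    and D: "\<forall>j. \<bar>efc F h dt z0 n j - efc F h dt z0 n (j + 1)\<bar> \<le> D"
  shows "\<bar>efc F h dt z0 (Suc n) j - efc F h dt z0 n j\<bar> \<le> D"
proof -
  define c where "c = deriv F (efc F h dt z0 n j)"
  have c1: "\<bar>c\<bar> * dt / h \<le> 1" using cfl unfolding efc_cfl_def c_def by blast
  have d1: "\<bar>efc F h dt z0 n (j + 1) - efc F h dt z0 n (j - 1)\<bar> \<le> 2 * D"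
  proof -
    have "\<bar>efc F h dt z0 n (j - 1) - efc F h dt z0 n j\<bar> \<le> D" using D[rule_format, of "j - 1"] by simp
    moreover have "\<bar>efc F h dt z0 n j - efc F h dt z0 n (j + 1)\<bar> \<le> D" using D by blast
    ultimately show ?thesis by linarith
  qed
  have cc: "\<bar>c * (dt / (2 * h))\<bar> \<le> 1 / 2"
    using c1 h dt by (simp add: abs_mult field_simps)
  have "\<bar>efc F h dt z0 (Suc n) j - efc F h dt z0 n j\<bar>
      = \<bar>c * (dt / (2 * h))\<bar> * \<bar>efc F h dt z0 n (j + 1) - efc F h dt z0 n (j - 1)\<bar>"
    by (simp add: c_def abs_mult)
  also have "\<dots> \<le> 1 / 2 * (2 * D)"
    by (rule mult_mono[OF cc d1]) auto
  finally show ?thesis by simp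
qed

lemma tri:
  fixes x y p q D :: real
  assumes "\<bar>x - y\<bar> \<le> D" "\<bar>p - x\<bar> \<le> D" "\<bar>q - y\<bar> \<le> D"
  shows "\<bar>p - q\<bar> \<le> 3 * D"
  using assms by linarith

lemma efc_growth:
  fixes z0 :: "int \<Rightarrow> real"
  assumes cfl: "efc_cfl F h dt z0" and h: "h > 0" and dt: "dt > 0"
    and D: "\<forall>j. \<bar>z0 j - z0 (j + 1)\<bar> \<le> D"
  shows "\<forall>j. \<bar>efc F h dt z0 n j - efc F h dt z0 n (j + 1)\<bar> \<le> 3 ^ n * D"
proof (induction n)
  case 0
  then show ?case using D by simp
next
  case (Suc n)
  show ?case
  proof
    fix j
    have a: "\<bar>efc F h dt z0 (Suc n) j - efc F h dt z0 n j\<bar> \<le> 3 ^ n * D"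
      by (rule efc_step[OF cfl h dt Suc.IH])
    have b: "\<bar>efc F h dt z0 (Suc n) (j + 1) - efc F h dt z0 n (j + 1)\<bar> \<le> 3 ^ n * D"
      by (rule efc_step[OF cfl h dt Suc.IH])
    have c: "\<bar>efc F h dt z0 n j - efc F h dt z0 n (j + 1)\<bar> \<le> 3 ^ n * D"
      using Suc.IH by blast
    have "\<bar>efc F h dt z0 (Suc n) j - efc F h dt z0 (Suc n) (j + 1)\<bar> \<le> 3 * (3 ^ n * D)"
      by (rule tri[OF c a b])
    then show "\<bar>efc F h dt z0 (Suc n) j - efc F h dt z0 (Suc n) (j + 1)\<bar> \<le> 3 ^ Suc n * D"
      by (simp only: power_Suc mult.assoc)
  qed
qed

lemma telescope:
  fixes g :: "int \<Rightarrow> real"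
  assumes "\<forall>i. \<bar>g i - g (i + 1)\<bar> \<le> e"
  shows "\<bar>g k - g (k + int m)\<bar> \<le> real m * e"
proof (induction m)
  case 0 then show ?case by simp
next
  case (Suc m)
  have "\<bar>g (k + int m) - g (k + int m + 1)\<bar> \<le> e" using assms by blast
  with Suc show ?case by (simp add: algebra_simps)
qed

lemma pow_bound:
  fixes N r :: nat
  assumes "N \<ge> 2" "r \<ge> 2"
  shows "real r * 3 ^ N \<le> 3 ^ (N * r)"
proof -
  have "r \<le> 3 ^ (r - 1)"
  proof -
    have "\<And>k::nat. k + 1 \<le> 3 ^ k"
    proof -
      fix k :: nat show "k + 1 \<le> 3 ^ k" by (induction k) auto
    qed
    from this[of "r - 1"] assms show ?thesis by simp
  qed
  also have "(3::nat) ^ (r - 1) \<le> 3 ^ (N * (r - 1))"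
    using assms by (intro power_increasing) auto
  finally have "r * 3 ^ N \<le> 3 ^ (N * (r - 1)) * 3 ^ N" by simp
  also have "\<dots> = 3 ^ (N * r)"
    using assms by (simp add: power_add[symmetric] algebra_simps)
  finally have "r * 3 ^ N \<le> (3::nat) ^ (N * r)" .
  then have "real (r * 3 ^ N) \<le> real (3 ^ (N * r))" by linarith
  then show ?thesis by simp
qed

theorem corollary1:
  fixes F :: "real \<Rightarrow> real" and u0 :: "real \<Rightarrow> real"
    and a h \<Delta>t \<epsilon> :: real and N r :: nat
  assumes F_diff: "\<forall>x. F differentiable (at x)"
    and F_C1: "continuous_on UNIV (deriv F)"
    and h_pos: "h > 0" and dt_pos: "\<Delta>t > 0"
    and N_gt: "N > 1" and r_even: "even r" and r_ge: "r \<ge> 2"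
    and cfl_coarse: "efc_cfl F h \<Delta>t (\<lambda>j. u0 (a + real_of_int j * h))"
    and cfl_fine: "efc_cfl F (h / real r) (\<Delta>t / real r) (\<lambda>i. u0 (a + real_of_int i * (h / real r)))"
    and eps_pos: "\<epsilon> > 0"
    and init: "\<forall>i. \<bar>u0 (a + real_of_int i * (h / real r)) - u0 (a + real_of_int (i + 1) * (h / real r))\<bar>
                   \<le> \<epsilon> / 3 ^ (N * r)"
  shows "\<forall>j n. n \<le> N \<longrightarrow>
           \<bar>efc F h \<Delta>t (\<lambda>j. u0 (a + real_of_int j * h)) (n + 1) j
              - efc F h \<Delta>t (\<lambda>j. u0 (a + real_of_int j * h)) n j\<bar> \<le> \<epsilon> / 3 ^ (N - n)
         \<and> \<bar>efc F h \<Delta>t (\<lambda>j. u0 (a + real_of_int j * h)) n j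
              - efc F h \<Delta>t (\<lambda>j. u0 (a + real_of_int j * h)) n (j + 1)\<bar> \<le> \<epsilon> / 3 ^ (N - n)"
proof (intro allI impI)
  fix j :: int and n :: nat
  assume nN: "n \<le> N"
  define z0 where "z0 = (\<lambda>j::int. u0 (a + real_of_int j * h))"
  define g where "g = (\<lambda>i::int. u0 (a + real_of_int i * (h / real r)))"
  define \<delta> where "\<delta> = real r * (\<epsilon> / 3 ^ (N * r))"
  have rpos: "real r > 0" using r_ge by simp
  have D0: "\<forall>j. \<bar>z0 j - z0 (j + 1)\<bar> \<le> \<delta>"
  proof
    fix j :: int
    have t: "\<bar>g (j * int r) - g (j * int r + int r)\<bar> \<le> real r * (\<epsilon> / 3 ^ (N * r))"
      by (rule telescope) (use init g_def in auto)
    have e1: "g (j * int r) = z0 j" unfolding g_def z0_def using rpos by simp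
    have "a + real_of_int (j * int r + int r) * (h / real r) = a + real_of_int (j + 1) * h"
      using rpos by (simp add: field_simps)
    then have e2: "g (j * int r + int r) = z0 (j + 1)" unfolding g_def z0_def by simp
    show "\<bar>z0 j - z0 (j + 1)\<bar> \<le> \<delta>" using t e1 e2 \<delta>_def by simp
  qed
  have G: "\<forall>j. \<bar>efc F h \<Delta>t z0 n j - efc F h \<Delta>t z0 n (j + 1)\<bar> \<le> 3 ^ n * \<delta>"
    by (rule efc_growth[OF cfl_coarse[folded z0_def] h_pos dt_pos D0])
  have key: "3 ^ n * \<delta> \<le> \<epsilon> / 3 ^ (N - n)"
  proof -
    have pb: "real r * 3 ^ N \<le> 3 ^ (N * r)" using pow_bound N_gt r_ge by simp
    have "(3::real) ^ n * 3 ^ (N - n) = 3 ^ N" using nN by (simp add: power_add[symmetric])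
    then have "3 ^ n * \<delta> * 3 ^ (N - n) = \<epsilon> * (real r * 3 ^ N) / 3 ^ (N * r)"
      unfolding \<delta>_def by (simp add: field_simps)
    also have "\<dots> \<le> \<epsilon> * 3 ^ (N * r) / 3 ^ (N * r)"
      using pb eps_pos by (intro divide_right_mono mult_left_mono) auto
    also have "\<dots> = \<epsilon>" by simp
    finally show ?thesis by (simp add: field_simps)
  qed
  have s: "\<bar>efc F h \<Delta>t z0 (Suc n) j - efc F h \<Delta>t z0 n j\<bar> \<le> 3 ^ n * \<delta>"
    by (rule efc_step[OF cfl_coarse[folded z0_def] h_pos dt_pos G])
  show "\<bar>efc F h \<Delta>t (\<lambda>j. u0 (a + real_of_int j * h)) (n + 1) j
              - efc F h \<Delta>t (\<lambda>j. u0 (a + real_of_int j * h)) n j\<bar> \<le> \<epsilon> / 3 ^ (N - n)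
         \<and> \<bar>efc F h \<Delta>t (\<lambda>j. u0 (a + real_of_int j * h)) n j
              - efc F h \<Delta>t (\<lambda>j. u0 (a + real_of_int j * h)) n (j + 1)\<bar> \<le> \<epsilon> / 3 ^ (N - n)"
  proof -
    have g1: "\<bar>efc F h \<Delta>t z0 n j - efc F h \<Delta>t z0 n (j + 1)\<bar> \<le> 3 ^ n * \<delta>" using G by blast
    have "\<bar>efc F h \<Delta>t z0 (n + 1) j - efc F h \<Delta>t z0 n j\<bar> \<le> \<epsilon> / 3 ^ (N - n)"
      using s key by simp
    moreover have "\<bar>efc F h \<Delta>t z0 n j - efc F h \<Delta>t z0 n (j + 1)\<bar> \<le> \<epsilon> / 3 ^ (N - n)"
      using g1 key by linarith
    ultimately show ?thesis unfolding z0_def by blast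
  qed
qed

end
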